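(* Let $T$ be a tree with positive edge weights rooted at the homebase $r$, let $q\ge 0$, and let $v$ be an internal vertex of $T$, i.e., a vertex different from $r$ with exactly one child. In a cost-optimal strategy exploring $T$, an agent occupying $v$ never returns, in its next move, to the vertex it occupied just before $v$.
   Context: Exploration model: given a connected graph with positive edge weights, a homebase vertex, and invoking cost $q\ge 0$, a strategy is a sequence of moves, each either invoking a new agent (appearing at the homebase) or an agent traversing an edge incident to its current vertex. A vertex is explored when first visited; the strategy explores the graph when every vertex has been visited by some agent (agents need not return). With $k$ agents, agent $i$ traversing total distance $d_i$ (weights counted with multiplicity), the cost is $kq+\sum_i d_i$; a strategy is cost-optimal if it explores the graph with minimum cost (off-line setting). *)

theory Defs
  imports Main Complex_Main
begin

definition is_walk :: "'a set set \<Rightarrow> 'a list \<Rightarrow> bool" where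
  "is_walk E xs \<longleftrightarrow> xs \<noteq> [] \<and> (\<forall>i. Suc i < length xs \<longrightarrow> {xs ! i, xs ! Suc i} \<in> E)"

definition is_path :: "'a set set \<Rightarrow> 'a list \<Rightarrow> bool" where
  "is_path E xs \<longleftrightarrow> is_walk E xs \<and> distinct xs"

definition is_cycle :: "'a set set \<Rightarrow> 'a list \<Rightarrow> bool" where
  "is_cycle E xs \<longleftrightarrow> length xs \<ge> 3 \<and> is_path E xs \<and> {last xs, hd xs} \<in> E"

definition simple_graph :: "'a set \<Rightarrow> 'a set set \<Rightarrow> bool" where
  "simple_graph V E \<longleftrightarrow> finite V \<and> (\<forall>e\<in>E. \<exists>x y. x \<noteq> y \<and> x \<in> V \<and> y \<in> V \<and> e = {x, y})"

definition connected_graph :: "'a set \<Rightarrow> 'a set set \<Rightarrow> bool" where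
  "connected_graph V E \<longleftrightarrow>
     (\<forall>x\<in>V. \<forall>y\<in>V. \<exists>xs. is_walk E xs \<and> hd xs = x \<and> last xs = y \<and> set xs \<subseteq> V)"

definition is_tree :: "'a set \<Rightarrow> 'a set set \<Rightarrow> bool" where
  "is_tree V E \<longleftrightarrow> simple_graph V E \<and> V \<noteq> {} \<and> connected_graph V E \<and> \<not> (\<exists>xs. is_cycle E xs)"

definition is_child :: "'a set set \<Rightarrow> 'a \<Rightarrow> 'a \<Rightarrow> 'a \<Rightarrow> bool" where
  "is_child E r v c \<longleftrightarrow> {v, c} \<in> E \<and> (\<exists>ps. is_path E (ps @ [v, c]) \<and> hd (ps @ [v, c]) = r)"

definition internal_vertex :: "'a set \<Rightarrow> 'a set set \<Rightarrow> 'a \<Rightarrow> 'a \<Rightarrow> bool" where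
  "internal_vertex V E r v \<longleftrightarrow> v \<in> V \<and> v \<noteq> r \<and> card {c. is_child E r v c} = 1"

text \<open>A move either invokes a new agent (appearing at the homebase) or lets agent i
  (agents numbered 0,1,... in order of invocation) traverse an edge to vertex u.\<close>
datatype 'a move = Invoke | Traverse nat 'a

definition step :: "'a \<Rightarrow> 'a list \<Rightarrow> 'a move \<Rightarrow> 'a list" where
  "step r pos m = (case m of Invoke \<Rightarrow> pos @ [r] | Traverse i u \<Rightarrow> pos[i := u])"

definition pos_after :: "'a \<Rightarrow> 'a move list \<Rightarrow> nat \<Rightarrow> 'a list" where
  "pos_after r S k = foldl (step r) [] (take k S)"

definition valid_strategy :: "'a set set \<Rightarrow> 'a \<Rightarrow> 'a move list \<Rightarrow> bool" where
  "valid_strategy E r S \<longleftrightarrow> (\<forall>k<length S. case S ! k of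
       Invoke \<Rightarrow> True
     | Traverse i u \<Rightarrow> i < length (pos_after r S k) \<and> {pos_after r S k ! i, u} \<in> E)"

definition explores :: "'a set \<Rightarrow> 'a \<Rightarrow> 'a move list \<Rightarrow> bool" where
  "explores V r S \<longleftrightarrow> V \<subseteq> (\<Union>k\<in>{0..length S}. set (pos_after r S k))"

definition num_agents :: "'a move list \<Rightarrow> nat" where
  "num_agents S = length (filter (\<lambda>m. m = Invoke) S)"

definition move_cost :: "('a set \<Rightarrow> real) \<Rightarrow> 'a \<Rightarrow> 'a move list \<Rightarrow> nat \<Rightarrow> real" where
  "move_cost w r S k = (case S ! k of Invoke \<Rightarrow> 0 | Traverse i u \<Rightarrow> w {pos_after r S k ! i, u})"

definition strategy_cost :: "real \<Rightarrow> ('a set \<Rightarrow> real) \<Rightarrow> 'a \<Rightarrow> 'a move list \<Rightarrow> real" where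
  "strategy_cost q w r S = q * real (num_agents S) + (\<Sum>k<length S. move_cost w r S k)"

definition cost_optimal ::
  "'a set \<Rightarrow> 'a set set \<Rightarrow> ('a set \<Rightarrow> real) \<Rightarrow> 'a \<Rightarrow> real \<Rightarrow> 'a move list \<Rightarrow> bool" where
  "cost_optimal V E w r q S \<longleftrightarrow> valid_strategy E r S \<and> explores V r S \<and>
     (\<forall>S'. valid_strategy E r S' \<and> explores V r S' \<longrightarrow> strategy_cost q w r S \<le> strategy_cost q w r S')"

end

theory Submission
  imports Defs
begin


fun wk :: "'a set set \<Rightarrow> 'a list \<Rightarrow> bool" where
  "wk E [] = False"
| "wk E [x] = True"
| "wk E (x # y # zs) = ({x, y} \<in> E \<and> wk E (y # zs))"

lemma wk_Cons: "wk E (x # xs) \<longleftrightarrow> xs = [] \<or> ({x, hd xs} \<in> E \<and> wk E xs)"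
  by (cases xs) auto

lemma is_walk_Cons2: "is_walk E (x # y # zs) \<longleftrightarrow> {x, y} \<in> E \<and> is_walk E (y # zs)"
  unfolding is_walk_def
proof safe
  fix i assume "\<forall>i. Suc i < length (x # y # zs) \<longrightarrow> {(x # y # zs) ! i, (x # y # zs) ! Suc i} \<in> E"
    "Suc i < length (y # zs)"
  then show "{(y # zs) ! i, (y # zs) ! Suc i} \<in> E" by (metis length_Cons nth_Cons_Suc Suc_less_eq)
next
  assume "\<forall>i. Suc i < length (x # y # zs) \<longrightarrow> {(x # y # zs) ! i, (x # y # zs) ! Suc i} \<in> E"
  then show "{x, y} \<in> E" by force
next
  fix i assume a: "{x, y} \<in> E" "\<forall>i. Suc i < length (y # zs) \<longrightarrow> {(y # zs) ! i, (y # zs) ! Suc i} \<in> E"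
    "Suc i < length (x # y # zs)"
  show "{(x # y # zs) ! i, (x # y # zs) ! Suc i} \<in> E"
  proof (cases i)
    case 0 then show ?thesis using a by simp
  next
    case (Suc k) then show ?thesis using a by auto
  qed
qed

lemma wk_iff: "is_walk E xs \<longleftrightarrow> wk E xs"
proof (induction xs rule: wk.induct)
  case (1 E) then show ?case by (simp add: is_walk_def)
next
  case (2 E x) then show ?case by (simp add: is_walk_def)
next
  case (3 E x y zs) then show ?case by (simp add: is_walk_Cons2)
qed

lemma wk_append_Cons: "wk E (xs @ y # ys) \<longleftrightarrow> wk E (y # ys) \<and> (xs = [] \<or> (wk E xs \<and> {last xs, y} \<in> E))"
proof (induction xs)
  case Nil then show ?case by simp
next
  case (Cons a xs) then show ?case by (cases xs) (auto simp: wk_Cons)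
qed

lemma wk_nonempty: "wk E xs \<Longrightarrow> xs \<noteq> []" by auto

lemma wk_take: "wk E xs \<Longrightarrow> 0 < n \<Longrightarrow> wk E (take n xs)"
proof -
  assume a: "wk E xs" "0 < n"
  show ?thesis
  proof (cases "drop n xs")
    case Nil then show ?thesis using a by simp
  next
    case (Cons y ys)
    have "xs = take n xs @ y # ys" using Cons by (metis append_take_drop_id)
    then have "wk E (take n xs @ y # ys)" using a by simp
    moreover have "take n xs \<noteq> []" using a Cons by auto
    ultimately show ?thesis by (simp add: wk_append_Cons)
  qed
qed

lemma wk_drop: "wk E xs \<Longrightarrow> n < length xs \<Longrightarrow> wk E (drop n xs)"
proof -
  assume a: "wk E xs" "n < length xs"
  obtain y ys where Cons: "drop n xs = y # ys" using a by (cases "drop n xs") auto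
  have "xs = take n xs @ y # ys" using Cons by (metis append_take_drop_id)
  then have "wk E (take n xs @ y # ys)" using a by simp
  then show ?thesis using Cons by (simp add: wk_append_Cons)
qed

lemma wk_rev: "wk E xs \<Longrightarrow> wk E (rev xs)"
proof (induction xs)
  case Nil then show ?case by simp
next
  case (Cons a xs)
  show ?case
  proof (cases xs)
    case Nil then show ?thesis by simp
  next
    case (Cons b ys)
    have "wk E (rev xs)" "{a, hd xs} \<in> E" using Cons.prems Cons.IH Cons by auto
    then show ?thesis using Cons by (auto simp: wk_append_Cons insert_commute)
  qed
qed

lemma wk_shortcut: "wk E (a @ [y] @ b @ [y] @ d) \<Longrightarrow> wk E (a @ [y] @ d)"
proof -
  assume "wk E (a @ [y] @ b @ [y] @ d)"
  then have 1: "wk E (y # b @ y # d)" "a = [] \<or> (wk E a \<and> {last a, y} \<in> E)"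
    by (simp_all add: wk_append_Cons)
  from 1(1) have "wk E ((y # b) @ y # d)" by simp
  then have "wk E (y # d)" by (simp only: wk_append_Cons)
  then show ?thesis using 1(2) by (simp add: wk_append_Cons)
qed

lemma wk_nth: "wk E xs \<Longrightarrow> Suc i < length xs \<Longrightarrow> {xs ! i, xs ! Suc i} \<in> E"
  using wk_iff[of E xs] unfolding is_walk_def by blast

lemma tree_walk:
  assumes nc: "\<not> (\<exists>xs. is_cycle E xs)" and pth: "is_path E (ps @ [v, c])"
    and hdr: "hd (ps @ [v, c]) = r" and w: "wk E xs" and h: "hd xs = r" and l: "last xs = c"
  shows "v \<in> set xs"
proof (rule ccontr)
  assume nv: "v \<notin> set xs"
  have xsne: "xs \<noteq> []" using w by auto
  have dist: "distinct (ps @ [v, c])" and wp: "wk E (ps @ [v, c])"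
    using pth by (auto simp: is_path_def wk_iff)
  have cps: "c \<notin> set ps" "v \<notin> set ps" "c \<noteq> v" using dist by auto
  have psne: "ps \<noteq> []"
  proof
    assume "ps = []" then have "r = v" using hdr by simp
    then show False using nv h xsne by (metis hd_in_set)
  qed
  have rps: "r \<in> set ps" using hdr psne by (simp add: hd_append) (metis hd_in_set)
  have ev: "{v, c} \<in> E"
  proof -
    have "wk E ((ps @ [v]) @ c # [])" using wp by simp
    then show ?thesis by (simp only: wk_append_Cons) simp
  qed
  define P where "P ys \<longleftrightarrow> wk E ys \<and> hd ys = c \<and> last ys \<in> set ps \<and> v \<notin> set ys" for ys
  have "P (rev xs)" unfolding P_def using w h l nv rps xsne
    by (simp add: wk_rev hd_rev last_rev)
  then obtain ys0 where P0: "P ys0" and mn: "\<And>ys. P ys \<Longrightarrow> length ys0 \<le> length ys"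
    using ex_has_least_nat[of P "rev xs" length] by blast
  have w0: "wk E ys0" and h0: "hd ys0 = c" and l0: "last ys0 \<in> set ps" and v0: "v \<notin> set ys0"
    using P0 by (auto simp: P_def)
  have ne0: "ys0 \<noteq> []" using w0 by auto
  have a: "ys0 ! k \<notin> set ps" if k: "Suc k < length ys0" for k
  proof
    assume kin: "ys0 ! k \<in> set ps"
    have "P (take (Suc k) ys0)" unfolding P_def
    proof (intro conjI)
      show "wk E (take (Suc k) ys0)" using w0 by (simp add: wk_take)
      show "hd (take (Suc k) ys0) = c" using h0 by (simp add: hd_take)
      show "last (take (Suc k) ys0) \<in> set ps" using kin k by (simp add: take_Suc_conv_app_nth)
      show "v \<notin> set (take (Suc k) ys0)" using v0 by (meson in_set_takeD)
    qed
    then have "length ys0 \<le> Suc k" using mn by fastforce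
    then show False using k by simp
  qed
  have d0: "distinct ys0"
  proof (rule ccontr)
    assume "\<not> distinct ys0"
    then obtain a b d y where eq: "ys0 = a @ [y] @ b @ [y] @ d" using not_distinct_decomp by blast
    have "P (a @ [y] @ d)" unfolding P_def
    proof (intro conjI)
      show "wk E (a @ [y] @ d)" using w0 eq wk_shortcut by metis
      show "hd (a @ [y] @ d) = c" using h0 eq by (cases a) auto
      show "last (a @ [y] @ d) \<in> set ps" using l0 eq by (cases d) auto
      show "v \<notin> set (a @ [y] @ d)" using v0 eq by auto
    qed
    then have "length ys0 \<le> length (a @ [y] @ d)" using mn by blast
    then show False using eq by simp
  qed
  have len2: "2 \<le> length ys0"
  proof -
    obtain z zs where z: "ys0 = z # zs" using ne0 by (cases ys0) auto
    have "zs \<noteq> []"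
    proof
      assume "zs = []" then show False using z h0 l0 cps by simp
    qed
    then show ?thesis using z by (cases zs) auto
  qed
  obtain k where k: "k < length ps" "ps ! k = last ys0" using l0 by (metis in_set_conv_nth)
  define D where "D = drop k (ps @ [v])"
  define Bt where "Bt = butlast ys0"
  have wpv: "wk E (ps @ [v])" using wk_take[OF wp, of "Suc (length ps)"] by simp
  have wD: "wk E D" unfolding D_def using wk_drop[OF wpv, of k] k by simp
  have lD: "last D = v" unfolding D_def using k by (simp add: last_drop)
  have hD: "hd D = ps ! k" unfolding D_def using k by (simp add: hd_drop_conv_nth nth_append)
  have lenD: "2 \<le> length D" unfolding D_def using k by simp
  have Bt_take: "Bt = take (length ys0 - 1) ys0" unfolding Bt_def by (simp add: butlast_conv_take)
  have wB: "wk E Bt" using wk_take[OF w0, of "length ys0 - 1"] len2 Bt_take by simp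
  have lenB: "1 \<le> length Bt" unfolding Bt_def using len2 by simp
  have hB: "hd Bt = c" using h0 Bt_take len2 by (simp add: hd_take)
  obtain b bs where Bc: "Bt = b # bs" using lenB by (cases Bt) auto
  have wC: "wk E (D @ Bt)"
    using wD wB lD hB ev lenD Bc by (auto simp: wk_append_Cons)
  have dD: "distinct D"
  proof -
    have "distinct (ps @ [v])" using dist by simp
    then show ?thesis unfolding D_def by (rule distinct_drop)
  qed
  have dB: "distinct Bt" unfolding Bt_def using d0 by (simp add: distinct_butlast)
  have disj: "set D \<inter> set Bt = {}"
  proof -
    have "set D \<subseteq> set ps \<union> {v}" unfolding D_def by (metis set_append empty_set list.simps(15) set_drop_subset)
    moreover have "x \<notin> set ps \<union> {v}" if "x \<in> set Bt" for x
    proof -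
      obtain t where t: "t < length Bt" "x = Bt ! t" using \<open>x \<in> set Bt\<close> by (metis in_set_conv_nth)
      have "x = ys0 ! t" using t unfolding Bt_def by (simp add: nth_butlast)
      moreover have "Suc t < length ys0" using t unfolding Bt_def by simp
      ultimately show ?thesis using a v0 by (metis Un_iff Suc_lessD nth_mem singletonD)
    qed
    ultimately show ?thesis by blast
  qed
  have lastB: "last Bt = ys0 ! (length ys0 - 2)"
  proof -
    have "Bt \<noteq> []" using lenB by auto
    then have "last Bt = Bt ! (length Bt - 1)" by (simp add: last_conv_nth)
    also have "\<dots> = ys0 ! (length Bt - 1)" unfolding Bt_def using lenB Bt_def
      by (simp add: nth_butlast)
    also have "length Bt - 1 = length ys0 - 2" unfolding Bt_def by simp
    finally show ?thesis .
  qed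
  have lastys: "last ys0 = ys0 ! Suc (length ys0 - 2)" using len2 ne0
    by (simp add: last_conv_nth Suc_diff_Suc numeral_2_eq_2)
  have close: "{last (D @ Bt), hd (D @ Bt)} \<in> E"
  proof -
    have "last (D @ Bt) = ys0 ! (length ys0 - 2)" using lastB Bc by simp
    moreover have "hd (D @ Bt) = ys0 ! Suc (length ys0 - 2)" using hD k lastys lenD by (cases D) auto
    ultimately show ?thesis using wk_nth[OF w0, of "length ys0 - 2"] len2 by simp
  qed
  have "is_cycle E (D @ Bt)" unfolding is_cycle_def is_path_def
    using wC dD dB disj lenD lenB close by (simp add: wk_iff)
  then show False using nc by blast
qed



definition okm :: "'a set set \<Rightarrow> 'a list \<Rightarrow> 'a move \<Rightarrow> bool" where
  "okm E pos m = (case m of Invoke \<Rightarrow> True | Traverse i u \<Rightarrow> i < length pos \<and> {pos ! i, u} \<in> E)"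

definition mcost :: "('a set \<Rightarrow> real) \<Rightarrow> 'a list \<Rightarrow> 'a move \<Rightarrow> real" where
  "mcost w pos m = (case m of Invoke \<Rightarrow> 0 | Traverse i u \<Rightarrow> w {pos ! i, u})"

fun vld :: "'a set set \<Rightarrow> 'a \<Rightarrow> 'a list \<Rightarrow> 'a move list \<Rightarrow> bool" where
  "vld E r pos [] = True"
| "vld E r pos (m # ms) = (okm E pos m \<and> vld E r (step r pos m) ms)"

fun vis :: "'a \<Rightarrow> 'a list \<Rightarrow> 'a move list \<Rightarrow> 'a set" where
  "vis r pos [] = set pos"
| "vis r pos (m # ms) = set pos \<union> vis r (step r pos m) ms"

fun cst :: "('a set \<Rightarrow> real) \<Rightarrow> 'a \<Rightarrow> 'a list \<Rightarrow> 'a move list \<Rightarrow> real" where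
  "cst w r pos [] = 0"
| "cst w r pos (m # ms) = mcost w pos m + cst w r (step r pos m) ms"

lemma vld_iff: "(\<forall>k<length S. okm E (foldl (step r) pos (take k S)) (S ! k)) \<longleftrightarrow> vld E r pos S"
proof (induction S arbitrary: pos)
  case Nil then show ?case by simp
next
  case (Cons m ms)
  have "(\<forall>k<length (m # ms). okm E (foldl (step r) pos (take k (m # ms))) ((m # ms) ! k)) \<longleftrightarrow>
     okm E pos m \<and> (\<forall>k<length ms. okm E (foldl (step r) (step r pos m) (take k ms)) (ms ! k))"
    by (auto simp: less_Suc_eq_0_disj)
  then show ?case using Cons.IH by simp
qed

lemma valid_iff: "valid_strategy E r S \<longleftrightarrow> vld E r [] S"
  unfolding valid_strategy_def vld_iff[symmetric] okm_def pos_after_def by simp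

lemma vis_iff: "(\<Union>k\<in>{0..length S}. set (foldl (step r) pos (take k S))) = vis r pos S"
proof (induction S arbitrary: pos)
  case Nil then show ?case by simp
next
  case (Cons m ms)
  have "{0..length (m # ms)} = insert 0 (Suc ` {0..length ms})"
    by (auto simp: image_iff)
  then have "(\<Union>k\<in>{0..length (m # ms)}. set (foldl (step r) pos (take k (m # ms)))) =
     set pos \<union> (\<Union>k\<in>{0..length ms}. set (foldl (step r) (step r pos m) (take k ms)))"
    by (simp del: image_Suc_atLeastAtMost)
  then show ?case using Cons.IH by simp
qed

lemma explores_iff: "explores V r S \<longleftrightarrow> V \<subseteq> vis r [] S"
  unfolding explores_def pos_after_def vis_iff ..

lemma cst_iff: "(\<Sum>k<length S. mcost w (foldl (step r) pos (take k S)) (S ! k)) = cst w r pos S"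
proof (induction S arbitrary: pos)
  case Nil then show ?case by simp
next
  case (Cons m ms)
  show ?case using Cons.IH[of "step r pos m"] by (simp only: length_Cons sum.lessThan_Suc_shift) simp
qed

lemma cost_iff: "strategy_cost q w r S = q * real (num_agents S) + cst w r [] S"
  unfolding strategy_cost_def cst_iff[symmetric] move_cost_def mcost_def pos_after_def by simp

lemma vld_append: "vld E r pos (xs @ ys) \<longleftrightarrow> vld E r pos xs \<and> vld E r (foldl (step r) pos xs) ys"
  by (induction xs arbitrary: pos) auto

lemma set_vis: "set pos \<subseteq> vis r pos ys"
  by (cases ys) auto

lemma vis_append: "vis r pos (xs @ ys) = vis r pos xs \<union> vis r (foldl (step r) pos xs) ys"
proof (induction xs arbitrary: pos)
  case Nil then show ?case using set_vis[of pos r ys] by auto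
next
  case (Cons a xs) then show ?case by auto
qed

lemma foldl_vis: "set (foldl (step r) pos xs) \<subseteq> vis r pos xs"
  by (induction xs arbitrary: pos) auto

lemma cst_append: "cst w r pos (xs @ ys) = cst w r pos xs + cst w r (foldl (step r) pos xs) ys"
  by (induction xs arbitrary: pos) auto

definition noi :: "nat \<Rightarrow> 'a move list \<Rightarrow> bool" where
  "noi i B \<longleftrightarrow> (\<forall>m\<in>set B. \<forall>y. m \<noteq> Traverse i y)"

lemma step_len: "length pos \<le> length (step r pos m)"
  by (cases m) (auto simp: step_def)

lemma step_upd: "i < length pos \<Longrightarrow> (\<forall>y. m \<noteq> Traverse i y) \<Longrightarrow>
   step r (pos[i := a]) m = (step r pos m)[i := a]"
  by (cases m) (auto simp: step_def list_update_append1 list_update_swap)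

lemma okm_upd: "i < length pos \<Longrightarrow> (\<forall>y. m \<noteq> Traverse i y) \<Longrightarrow> okm E (pos[i := a]) m = okm E pos m"
  by (cases m) (auto simp: okm_def)

lemma mcost_upd: "i < length pos \<Longrightarrow> (\<forall>y. m \<noteq> Traverse i y) \<Longrightarrow> mcost w (pos[i := a]) m = mcost w pos m"
  by (cases m) (auto simp: mcost_def)

lemma upd_lemmas: "i < length pos \<Longrightarrow> noi i B \<Longrightarrow>
   foldl (step r) (pos[i := a]) B = (foldl (step r) pos B)[i := a] \<and>
   vld E r (pos[i := a]) B = vld E r pos B \<and>
   cst w r (pos[i := a]) B = cst w r pos B \<and>
   vis r (pos[i := a]) B \<subseteq> insert a (vis r pos B) \<and>
   i < length (foldl (step r) pos B) \<and> foldl (step r) pos B ! i = pos ! i"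
proof (induction B arbitrary: pos)
  case Nil then show ?case using set_update_subset_insert[of pos i a] by auto
next
  case (Cons m ms)
  have nm: "\<forall>y. m \<noteq> Traverse i y" and nms: "noi i ms" using Cons.prems by (auto simp: noi_def)
  have il: "i < length (step r pos m)" using Cons.prems(1) step_len[of pos r m] by simp
  have ni: "step r pos m ! i = pos ! i" using Cons.prems(1) nm
    by (cases m) (auto simp: step_def nth_append)
  note IH = Cons.IH[OF il nms]
  have su: "step r (pos[i := a]) m = (step r pos m)[i := a]" using step_upd[OF Cons.prems(1) nm] .
  show ?case using IH su okm_upd[OF Cons.prems(1) nm] mcost_upd[OF Cons.prems(1) nm] ni
      set_update_subset_insert[of pos i a]
    by auto
qed

lemma vis_walk: "vld E r pos T \<Longrightarrow> y \<in> vis r pos T \<Longrightarrow>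
  \<exists>xs. wk E xs \<and> last xs = y \<and> hd xs \<in> insert r (set pos) \<and> set xs \<subseteq> vis r pos T"
proof (induction T arbitrary: pos)
  case Nil then show ?case by (intro exI[of _ "[y]"]) auto
next
  case (Cons m ms)
  show ?case
  proof (cases "y \<in> set pos")
    case True then show ?thesis by (intro exI[of _ "[y]"]) auto
  next
    case False
    then have yv: "y \<in> vis r (step r pos m) ms" using Cons.prems by simp
    have ok: "okm E pos m" and vl: "vld E r (step r pos m) ms" using Cons.prems by auto
    obtain xs where xs: "wk E xs" "last xs = y" "hd xs \<in> insert r (set (step r pos m))"
      "set xs \<subseteq> vis r (step r pos m) ms" using Cons.IH[OF vl yv] by blast
    have sub: "set xs \<subseteq> vis r pos (m # ms)" using xs(4) by auto
    show ?thesis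
    proof (cases m)
      case Invoke
      then have "hd xs \<in> insert r (set pos)" using xs(3) by (auto simp: step_def)
      then show ?thesis using xs sub by blast
    next
      case (Traverse i u)
      have il: "i < length pos" and eu: "{pos ! i, u} \<in> E" using ok Traverse by (auto simp: okm_def)
      have "hd xs \<in> insert r (insert u (set pos))" using xs(3) Traverse set_update_subset_insert[of pos i u]
        by (auto simp: step_def)
      then consider "hd xs \<in> insert r (set pos)" | "hd xs = u" by blast
      then show ?thesis
      proof cases
        case 1 then show ?thesis using xs sub by blast
      next
        case 2
        have ne: "xs \<noteq> []" using xs(1) by auto
        have "wk E (pos ! i # xs)" using xs(1) eu 2 ne by (simp add: wk_Cons)
        moreover have "last (pos ! i # xs) = y" using xs(2) ne by simp
        moreover have "hd (pos ! i # xs) \<in> insert r (set pos)" using il by simp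
        moreover have "set (pos ! i # xs) \<subseteq> vis r pos (m # ms)" using sub il by auto
        ultimately show ?thesis by blast
      qed
    qed
  qed
qed

lemma decomp: "j < j' \<Longrightarrow> j' < length S \<Longrightarrow>
  S = take j S @ S ! j # take (j' - Suc j) (drop (Suc j) S) @ S ! j' # drop (Suc j') S"
proof -
  assume a: "j < j'" "j' < length S"
  have "S = take j' S @ S ! j' # drop (Suc j') S" using a id_take_nth_drop by blast
  moreover have "take j' S = take j S @ S ! j # take (j' - Suc j) (drop (Suc j) S)"
  proof -
    have "take j' S = take j (take j' S) @ take j' S ! j # drop (Suc j) (take j' S)"
      using a id_take_nth_drop[of j "take j' S"] by simp
    also have "\<dots> = take j S @ S ! j # take (j' - Suc j) (drop (Suc j) S)"
      using a by (simp add: min_def drop_take)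
    finally show ?thesis .
  qed
  ultimately show ?thesis by simp
qed



theorem mainTheorem6:
  fixes V :: "'a set" and E :: "'a set set" and w :: "'a set \<Rightarrow> real"
    and r v :: 'a and q :: real and S :: "'a move list"
  assumes "is_tree V E"
    and "r \<in> V"
    and "\<forall>e\<in>E. w e > 0"
    and "q \<ge> 0"
    and "internal_vertex V E r v"
    and "cost_optimal V E w r q S"
  shows "\<forall>j j' i x. j < j' \<and> j' < length S \<and> S ! j = Traverse i v \<and> S ! j' = Traverse i x
           \<and> (\<forall>l. j < l \<and> l < j' \<longrightarrow> (\<forall>y. S ! l \<noteq> Traverse i y))
           \<longrightarrow> x \<noteq> pos_after r S j ! i"
proof (intro allI impI notI)
  fix j j' i x
  assume H: "j < j' \<and> j' < length S \<and> S ! j = Traverse i v \<and> S ! j' = Traverse i x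
           \<and> (\<forall>l. j < l \<and> l < j' \<longrightarrow> (\<forall>y. S ! l \<noteq> Traverse i y))"
    and xe: "x = pos_after r S j ! i"
  have jj: "j < j'" "j' < length S" and m1: "S ! j = Traverse i v" and m2: "S ! j' = Traverse i x"
    and between: "\<And>l y. j < l \<Longrightarrow> l < j' \<Longrightarrow> S ! l \<noteq> Traverse i y" using H by auto
  define A where "A = take j S"
  define B where "B = take (j' - Suc j) (drop (Suc j) S)"
  define C where "C = drop (Suc j') S"
  have Seq: "S = A @ Traverse i v # B @ Traverse i x # C"
    using decomp[OF jj] m1 m2 unfolding A_def B_def C_def by simp
  have nB: "noi i B" unfolding noi_def
  proof (intro ballI allI)
    fix m y assume "m \<in> set B"
    then obtain t where t: "t < length B" "m = B ! t" by (metis in_set_conv_nth)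
    have "m = S ! (Suc j + t)" "j < Suc j + t" "Suc j + t < j'" using t jj unfolding B_def by auto
    then show "m \<noteq> Traverse i y" using between[of "Suc j + t" y] by simp
  qed
  define P0 where "P0 = foldl (step r) [] A"
  have pe: "pos_after r S j = P0" unfolding pos_after_def P0_def A_def by simp
  define p where "p = P0 ! i"
  have xp: "x = p" using xe pe p_def by simp
  define S' where "S' = A @ B @ C"
  have opt0: "valid_strategy E r S \<and> explores V r S \<and>
     (\<forall>S'. valid_strategy E r S' \<and> explores V r S' \<longrightarrow> strategy_cost q w r S \<le> strategy_cost q w r S')"
    using assms(6) unfolding cost_optimal_def .
  have opt: "valid_strategy E r S" "explores V r S"
    "\<And>S'. valid_strategy E r S' \<Longrightarrow> explores V r S' \<Longrightarrow> strategy_cost q w r S \<le> strategy_cost q w r S'"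
    using opt0 by blast+
  have vS: "vld E r [] S" using opt(1) by (simp only: valid_iff)
  have vS2: "vld E r [] (A @ (Traverse i v # (B @ Traverse i x # C)))" using vS by (simp only: Seq)
  have vA: "vld E r [] A" and vr0: "vld E r P0 (Traverse i v # (B @ Traverse i x # C))"
    using vS2 unfolding vld_append P0_def by blast+
  have ok1: "okm E P0 (Traverse i v)"
    and vrest: "vld E r (step r P0 (Traverse i v)) (B @ Traverse i x # C)"
    using vr0 by simp_all
  have il: "i < length P0" and epv: "{p, v} \<in> E" using ok1 unfolding okm_def p_def by auto
  have st1: "step r P0 (Traverse i v) = P0[i := v]" by (simp add: step_def)
  note U = upd_lemmas[OF il nB, of r v]
  note U0 = upd_lemmas[OF il nB, of r p]
  define Q where "Q = foldl (step r) P0 B"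
  have P2: "foldl (step r) (P0[i := v]) B = Q[i := v]" using U Q_def by simp
  have iQ: "i < length Q" "Q ! i = p" using U Q_def p_def by auto
  have st2: "step r (Q[i := v]) (Traverse i x) = Q" using iQ xp list_update_id[of Q i] by (simp add: step_def)
  have vB: "vld E r P0 B" and vC: "vld E r Q C"
    using vrest U st1 P2 st2 by (simp_all add: vld_append)
  have vS': "vld E r [] S'" unfolding S'_def using vA vB vC
    by (simp add: vld_append P0_def Q_def)
  have cS: "cst w r [] S = cst w r [] A + w {p, v} + cst w r P0 B + w {v, p} + cst w r Q C"
    unfolding Seq using st1 P2 st2 U iQ xp
    by (simp add: cst_append P0_def[symmetric] mcost_def p_def)
  have cS': "cst w r [] S' = cst w r [] A + cst w r P0 B + cst w r Q C"
    unfolding S'_def by (simp add: cst_append P0_def Q_def)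
  have nag: "num_agents S' = num_agents S" unfolding S'_def Seq num_agents_def by simp
  have wpos: "w {p, v} > 0" using assms(3) epv by auto
  have costlt: "strategy_cost q w r S' < strategy_cost q w r S"
    using cS cS' nag wpos by (simp add: cost_iff insert_commute)
  have visS: "vis r [] S \<subseteq> insert v (vis r [] S')"
  proof -
    have "vis r [] S = vis r [] A \<union> (set P0 \<union> (vis r (P0[i := v]) B \<union> (set (Q[i := v]) \<union> vis r Q C)))"
      unfolding Seq using st1 P2 st2 by (simp add: vis_append P0_def[symmetric])
    moreover have "set (Q[i := v]) \<subseteq> vis r (P0[i := v]) B" using foldl_vis[of r "P0[i := v]" B] P2 by simp
    moreover have "vis r (P0[i := v]) B \<subseteq> insert v (vis r P0 B)" using U by simp
    moreover have "vis r [] S' = vis r [] A \<union> vis r P0 B \<union> vis r Q C"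
      unfolding S'_def by (simp add: vis_append P0_def Q_def Un_assoc)
    moreover have "set P0 \<subseteq> vis r [] A" unfolding P0_def by (rule foldl_vis)
    ultimately show ?thesis by blast
  qed
  have VS: "V \<subseteq> vis r [] S" using opt(2) by (simp only: explores_iff)
  obtain c where ch: "is_child E r v c"
  proof -
    have "card {c. is_child E r v c} = 1" using assms(5) unfolding internal_vertex_def by simp
    then obtain c0 where "{c. is_child E r v c} = {c0}" by (rule card_1_singletonE)
    then have "is_child E r v c0" by (metis mem_Collect_eq singletonI)
    then show ?thesis by (rule that)
  qed
  obtain ps where evc: "{v, c} \<in> E" and pth: "is_path E (ps @ [v, c])" and hr: "hd (ps @ [v, c]) = r"
    using ch unfolding is_child_def by blast
  have cv: "c \<noteq> v" using pth unfolding is_path_def by auto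
  have sg: "simple_graph V E" using assms(1) unfolding is_tree_def by simp
  have "\<forall>e\<in>E. \<exists>x y. x \<noteq> y \<and> x \<in> V \<and> y \<in> V \<and> e = {x, y}" using sg unfolding simple_graph_def by (rule conjunct2)
  from bspec[OF this evc] obtain a b where ab: "a \<in> V" "b \<in> V" "{v, c} = {a, b}" by blast
  have "c \<in> {a, b}" using ab(3) by (metis insertCI)
  then have cV: "c \<in> V" using ab(1,2) by blast
  have cS'': "c \<in> vis r [] S'" using cV VS visS cv by blast
  obtain xs where xs: "wk E xs" "last xs = c" "hd xs \<in> insert r (set [])" "set xs \<subseteq> vis r [] S'"
    using vis_walk[OF vS' cS''] by blast
  have nc: "\<not> (\<exists>xs. is_cycle E xs)" using assms(1) unfolding is_tree_def by simp
  have "v \<in> set xs" using tree_walk[OF nc pth hr xs(1) _ xs(2)] xs(3) by simp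
  then have "v \<in> vis r [] S'" using xs(4) by blast
  then have "V \<subseteq> vis r [] S'" using VS visS by blast
  then have "explores V r S'" by (simp only: explores_iff)
  moreover have "valid_strategy E r S'" using vS' by (simp only: valid_iff)
  ultimately have "strategy_cost q w r S \<le> strategy_cost q w r S'" using opt(3) by blast
  then show False using costlt by simp
qed

end
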